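(* Let $a<0$, $I=(a,+\infty)$, and let $V\in C^2(I)$ satisfy $\lim_{u\to a^+}V(u)=h^*>0$, $\lim_{u\to a^+}V'(u)=-\infty$, $V(0)=V'(0)=0$, $V''(0)>0$, $uV'(u)>0$ for all $u\in I\setminus\{0\}$, and $V(u)\to+\infty$ as $u\to+\infty$. Let $\beta>0$ be the point with $V(\beta)=h^*$. If $u/V'(u)\to+\infty$ as $u\to+\infty$ and $V''(u)>0$ for all $u>\beta$, then the extended period function satisfies $T(h)\to+\infty$ as $h\to+\infty$.
   Context: For $h\in(0,h^* )$ let $a<u^-(h)<0<u^+(h)$ be the two solutions of $V(u)=h$; for $h\ge h^*$ let $u^+(h)>0$ be the positive solution of $V(u)=h$. Define $T_p(h)=\sqrt2\int_{u^-(h)}^{u^+(h)}\frac{du}{\sqrt{h-V(u)}}$ for $0<h<h^*$ and $T_b(h)=\sqrt2\int_{a}^{u^+(h)}\frac{du}{\sqrt{h-V(u)}}$ for $h\ge h^*$. The extended period function (of the equation $\ddot u+V'(u)=0$) is $T(h)=T_p(h)$ for $0<h<h^*$ and $T(h)=T_b(h)$ for $h\ge h^*$. *)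

theory Defs
  imports "HOL-Analysis.Analysis"
begin

definition uplus :: "(real \<Rightarrow> real) \<Rightarrow> real \<Rightarrow> real" where
  "uplus V h = (THE u. 0 < u \<and> V u = h)"

definition uminus_lvl :: "(real \<Rightarrow> real) \<Rightarrow> real \<Rightarrow> real \<Rightarrow> real" where
  "uminus_lvl V a h = (THE u. a < u \<and> u < 0 \<and> V u = h)"

text \<open>Period integrals, as (possibly infinite) nonnegative Lebesgue integrals of the
  improper integrals sqrt 2 * int du / sqrt(h - V u).\<close>

definition Tp :: "(real \<Rightarrow> real) \<Rightarrow> real \<Rightarrow> real \<Rightarrow> ennreal" where
  "Tp V a h = ennreal (sqrt 2) *
     (\<integral>\<^sup>+ u. indicator {uminus_lvl V a h<..<uplus V h} u * ennreal (1 / sqrt (h - V u)) \<partial>lborel)"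

definition Tb :: "(real \<Rightarrow> real) \<Rightarrow> real \<Rightarrow> real \<Rightarrow> ennreal" where
  "Tb V a h = ennreal (sqrt 2) *
     (\<integral>\<^sup>+ u. indicator {a<..<uplus V h} u * ennreal (1 / sqrt (h - V u)) \<partial>lborel)"

definition Tper :: "(real \<Rightarrow> real) \<Rightarrow> real \<Rightarrow> real \<Rightarrow> real \<Rightarrow> ennreal" where
  "Tper V a hs h = (if h < hs then Tp V a h else Tb V a h)"

end

theory Submission
  imports Defs
begin

theorem lemma2p2:
  fixes V V' V'' :: "real \<Rightarrow> real" and a hs \<beta> :: real
  assumes a_neg: "a < 0"
    and V_deriv: "\<And>u. a < u \<Longrightarrow> (V has_real_derivative V' u) (at u)"
    and V'_deriv: "\<And>u. a < u \<Longrightarrow> (V' has_real_derivative V'' u) (at u)"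
    and V''_cont: "continuous_on {a<..} V''"
    and lim_V_a: "(V \<longlongrightarrow> hs) (at_right a)"
    and hs_pos: "hs > 0"
    and lim_V'_a: "filterlim V' at_bot (at_right a)"
    and V0: "V 0 = 0" and V'0: "V' 0 = 0" and V''0: "V'' 0 > 0"
    and sign: "\<And>u. a < u \<Longrightarrow> u \<noteq> 0 \<Longrightarrow> u * V' u > 0"
    and V_infty: "filterlim V at_top at_top"
    and beta_pos: "\<beta> > 0" and V_beta: "V \<beta> = hs"
    and quot_infty: "filterlim (\<lambda>u. u / V' u) at_top at_top"
    and convex: "\<And>u. u > \<beta> \<Longrightarrow> V'' u > 0"
  shows "((\<lambda>h. Tper V a hs h) \<longlongrightarrow> \<infinity>) at_top"
proof -
  have V'pos: "V' u > 0" if "u > 0" for u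
    using sign[of u] that a_neg by (simp add: zero_less_mult_iff)
  have mono: "V x < V y" if xy: "0 \<le> x" "x < y" for x y
  proof -
    obtain z where z: "x < z" "z < y" "V y - V x = (y - x) * V' z"
      using MVT2[OF \<open>x < y\<close>, of V V'] V_deriv xy a_neg by force
    moreover have "(y - x) * V' z > 0" using V'pos[of z] xy z by (intro mult_pos_pos) auto
    ultimately show ?thesis by linarith
  qed
  have V'mono: "V' x < V' y" if xy: "\<beta> < x" "x < y" for x y
  proof -
    obtain z where z: "x < z" "z < y" "V' y - V' x = (y - x) * V'' z"
      using MVT2[OF \<open>x < y\<close>, of V' V''] V'_deriv xy a_neg beta_pos by force
    moreover have "(y - x) * V'' z > 0" using convex[of z] xy z by (intro mult_pos_pos) auto
    ultimately show ?thesis by linarith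
  qed
  have ex: "\<exists>p>0. V p = h" if hpos: "h > 0" for h
  proof -
    obtain X where X: "\<And>x. x \<ge> X \<Longrightarrow> V x \<ge> h"
      using V_infty unfolding filterlim_at_top eventually_at_top_linorder by blast
    have "\<exists>x. 0 \<le> x \<and> x \<le> max X 0 \<and> V x = h"
      apply (rule IVT)
      using X[of "max X 0"] hpos V0 a_neg by (auto intro!: DERIV_isCont[OF V_deriv])
    then obtain x where "0 \<le> x" "V x = h" by blast
    then show ?thesis using hpos V0 by (cases "x = 0") (auto intro!: exI[of _ x])
  qed
  have up: "uplus V h > 0 \<and> V (uplus V h) = h" if hpos: "h > 0" for h
  proof -
    obtain p where p: "p > 0" "V p = h" using ex hpos by blast
    have "\<exists>!p. 0 < p \<and> V p = h"
    proof (rule ex1I[of _ p])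
      show "0 < p \<and> V p = h" using p by simp
      fix q assume "0 < q \<and> V q = h"
      then show "q = p" using mono[of p q] mono[of q p] p
        by (metis less_eq_real_def linorder_neqE_linordered_idom less_irrefl)
    qed
    then show ?thesis unfolding uplus_def by (rule theI')
  qed
  have up_large: "uplus V h > Z" if "h > V (max Z 1)" "h > 0" for h Z
  proof (rule ccontr)
    assume "\<not> Z < uplus V h"
    then have "uplus V h \<le> max Z 1" by simp
    then have "V (uplus V h) \<le> V (max Z 1)"
      using mono[of "uplus V h" "max Z 1"] up[OF that(2)] by (cases "uplus V h = max Z 1") auto
    then show False using up[OF that(2)] that by simp
  qed
  define g where "g h = sqrt 2 * ((uplus V h - \<beta>) / sqrt (V' (uplus V h) * (uplus V h - \<beta>)))" for h
  have bound: "ennreal (g h) \<le> Tper V a hs h" if "h > hs" for h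
  proof -
    define p where "p = uplus V h"
    have hp: "h > 0" using that hs_pos by simp
    have p: "p > 0" "V p = h" using up[OF hp] p_def by auto
    have pb: "p > \<beta>"
    proof (rule ccontr)
      assume "\<not> \<beta> < p"
      then have "V p \<le> V \<beta>" using mono[of p \<beta>] p by (cases "p = \<beta>") auto
      then show False using p that V_beta by simp
    qed
    have V'p: "V' p > 0" using V'pos p by simp
    define c where "c = 1 / sqrt (V' p * (p - \<beta>))"
    have c0: "c \<ge> 0" using c_def V'p pb by simp
    have pt: "indicator {\<beta><..<p} u * ennreal c \<le> indicator {a<..<p} u * ennreal (1 / sqrt (h - V u))" for u
    proof (cases "u \<in> {\<beta><..<p}")
      case True
      then have u: "\<beta> < u" "u < p" by auto
      obtain z where z: "u < z" "z < p" "V p - V u = (p - u) * V' z"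
        using MVT2[OF \<open>u < p\<close>, of V V'] V_deriv u a_neg beta_pos by force
      have "V' z \<le> V' p" using V'mono[of z p] z u by simp
      have Vz: "V' z > 0" using V'pos[of z] z u beta_pos by simp
      have pos: "h - V u > 0" using z p u Vz by simp
      have "h - V u \<le> V' p * (p - \<beta>)"
      proof -
        have "h - V u = (p - u) * V' z" using z p by simp
        also have "\<dots> \<le> (p - \<beta>) * V' p"
          by (rule mult_mono) (use u z \<open>V' z \<le> V' p\<close> Vz in auto)
        finally show ?thesis by (simp add: mult.commute)
      qed
      then have "c \<le> 1 / sqrt (h - V u)" unfolding c_def
        using pos by (intro divide_left_mono) (auto intro: real_sqrt_le_mono)
      moreover have "u \<in> {a<..<p}" using u a_neg beta_pos by auto
      ultimately show ?thesis using True by (simp add: ennreal_leI)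
    qed simp
    have "ennreal c * ennreal (p - \<beta>) = (\<integral>\<^sup>+ u. ennreal c * indicator {\<beta><..<p} u \<partial>lborel)"
      using pb by (simp add: nn_integral_cmult_indicator)
    also have "\<dots> \<le> (\<integral>\<^sup>+ u. indicator {a<..<p} u * ennreal (1 / sqrt (h - V u)) \<partial>lborel)"
      by (rule nn_integral_mono) (use pt in \<open>simp add: mult.commute\<close>)
    finally have I: "ennreal (c * (p - \<beta>)) \<le> (\<integral>\<^sup>+ u. indicator {a<..<p} u * ennreal (1 / sqrt (h - V u)) \<partial>lborel)"
      using c0 pb by (simp add: ennreal_mult)
    have gh: "g h = sqrt 2 * (c * (p - \<beta>))"
      unfolding g_def c_def p_def[symmetric] by simp
    have "ennreal (g h) = ennreal (sqrt 2) * ennreal (c * (p - \<beta>))"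
      unfolding gh using c0 pb by (intro ennreal_mult) auto
    also have "\<dots> \<le> Tb V a h" unfolding Tb_def p_def[symmetric]
      by (rule mult_left_mono[OF I]) simp
    finally show ?thesis unfolding Tper_def using that by simp
  qed
  have glim: "\<forall>\<^sub>F h in at_top. g h \<ge> r" for r
  proof -
    obtain X where X: "\<And>x. x \<ge> X \<Longrightarrow> x / V' x \<ge> 2 * r\<^sup>2"
      using quot_infty unfolding filterlim_at_top eventually_at_top_linorder by blast
    let ?Z = "max X (2 * \<beta>)"
    have "\<forall>\<^sub>F h in at_top. h > max (V (max ?Z 1)) hs"
      by (rule eventually_gt_at_top)
    then show ?thesis
    proof eventually_elim
      case (elim h)
      define p where "p = uplus V h"
      have hp: "h > 0" using elim hs_pos by simp
      have pZ: "p > ?Z" using up_large[of ?Z h] elim hp p_def by simp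
      have pb: "p > \<beta>" using pZ beta_pos by simp
      have V'p: "V' p > 0" using V'pos pb beta_pos by simp
      have q: "p / V' p \<ge> 2 * r\<^sup>2" using X[of p] pZ by simp
      have "(p - \<beta>) / V' p \<ge> (p / V' p) / 2"
        using pZ V'p by (simp add: field_simps)
      then have q2: "(p - \<beta>) / V' p \<ge> r\<^sup>2" using q by simp
      have "g h = sqrt 2 * sqrt ((p - \<beta>) / V' p)"
      proof -
        have s: "sqrt (p - \<beta>) * sqrt (p - \<beta>) = p - \<beta>" using pb by simp
        have "(p - \<beta>) / sqrt (V' p * (p - \<beta>)) = sqrt (p - \<beta>) / sqrt (V' p)"
        proof -
          have "(p - \<beta>) / sqrt (V' p * (p - \<beta>)) = ((p - \<beta>) / sqrt (p - \<beta>)) / sqrt (V' p)"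
            by (metis real_sqrt_mult divide_divide_eq_left mult.commute)
          also have "\<dots> = sqrt (p - \<beta>) / sqrt (V' p)" using pb by (simp add: real_div_sqrt)
          finally show ?thesis .
        qed
        then show ?thesis unfolding g_def p_def[symmetric] by (simp add: real_sqrt_divide)
      qed
      also have "\<dots> \<ge> 1 * sqrt (r\<^sup>2)"
        by (rule mult_mono) (use q2 in \<open>auto intro: real_sqrt_le_mono simp del: real_sqrt_abs\<close>)
      finally show ?case by simp
    qed
  qed
  show ?thesis
    unfolding order_tendsto_iff
  proof (intro conjI allI impI)
    fix l :: ennreal assume "l < \<infinity>"
    then obtain r where r: "l = ennreal r" "r \<ge> 0" by (cases l) auto
    have "\<forall>\<^sub>F h in at_top. g h \<ge> r + 1 \<and> h > hs"
      using glim[of "r+1"] eventually_gt_at_top[of hs] by eventually_elim auto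
    then show "\<forall>\<^sub>F h in at_top. l < Tper V a hs h"
    proof eventually_elim
      case (elim h)
      have "l < ennreal (g h)" using r elim by (simp add: ennreal_less_iff)
      also have "\<dots> \<le> Tper V a hs h" using bound elim by simp
      finally show ?case .
    qed
  next
    fix u :: ennreal assume "u > \<infinity>" then show "\<forall>\<^sub>F h in at_top. Tper V a hs h < u" by simp
  qed
qed

end
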